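(* For a polygonal knot $K$, $$MD(K) \geq \min\{2\,R(K),\,MinEdge(K)\}.$$
   Context: A polygonal knot $K$ with $n$ edges is given by distinct vertices $v_1,\dots,v_n\in\mathbb{R}^3$ (indices mod $n$), with edges $e_i=[v_i,v_{i+1}]$ meeting only at the common vertex of adjacent edges. $|e_i|$ is the length of $e_i$ and $MinEdge(K)=\min_i|e_i|$. $MD(K)$ is the minimum distance between non-adjacent edges of $K$. $angle(v_i)\in[0,\pi)$ is the turning angle at $v_i$ (angle between $v_i-v_{i-1}$ and $v_{i+1}-v_i$). Let $Rad(v_i)=\dfrac{\min\{|e_{i-1}|,|e_i|\}}{2\tan(angle(v_i)/2)}$ and $MinRad(K)=\min_i Rad(v_i)$. For $x\in K$ let $d_x(y)=\Vert x-y\Vert$ for $y\in K$. A point $y$ is a turning point for $x$ if, moving along the knot, $d_x$ changes from increasing to decreasing or from decreasing to increasing at $y$. Let $DC(K)$ be the set of pairs $(x,y)$, $x\neq y$, with $x$ a turning point of $d_y$ and $y$ a turning point of $d_x$, and $dcsd(K)=\min\{\Vert x-y\Vert:(x,y)\in DC(K)\}$. The polygonal thickness radius is $R(K)=\min\{MinRad(K),dcsd(K)/2\}$. *)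

theory Defs
  imports "HOL-Analysis.Analysis" "HOL-Library.Extended_Real"
begin

text \<open>A polygonal knot with n edges is given by n and a vertex function v;
  vertex i is v (i mod n) (indices mod n).\<close>

type_synonym pt = "real ^ 3"

definition vtx :: "nat \<Rightarrow> (nat \<Rightarrow> pt) \<Rightarrow> nat \<Rightarrow> pt" where
  "vtx n v i = v (i mod n)"

definition edge :: "nat \<Rightarrow> (nat \<Rightarrow> pt) \<Rightarrow> nat \<Rightarrow> pt set" where
  "edge n v i = closed_segment (vtx n v i) (vtx n v (Suc i))"

definition edge_len :: "nat \<Rightarrow> (nat \<Rightarrow> pt) \<Rightarrow> nat \<Rightarrow> real" where
  "edge_len n v i = dist (vtx n v i) (vtx n v (Suc i))"

definition adjacent_edges :: "nat \<Rightarrow> nat \<Rightarrow> nat \<Rightarrow> bool" where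
  "adjacent_edges n i j \<longleftrightarrow> i \<noteq> j \<and> (j = Suc i mod n \<or> i = Suc j mod n)"

definition polygonal_knot :: "nat \<Rightarrow> (nat \<Rightarrow> pt) \<Rightarrow> bool" where
  "polygonal_knot n v \<longleftrightarrow> 3 \<le> n \<and> inj_on v {..<n} \<and>
     (\<forall>i<n. \<forall>j<n. i \<noteq> j \<longrightarrow>
        (if j = Suc i mod n then edge n v i \<inter> edge n v j = {vtx n v j}
         else if i = Suc j mod n then edge n v i \<inter> edge n v j = {vtx n v i}
         else edge n v i \<inter> edge n v j = {}))"

definition knot_set :: "nat \<Rightarrow> (nat \<Rightarrow> pt) \<Rightarrow> pt set" where
  "knot_set n v = (\<Union>i<n. edge n v i)"

definition MinEdge :: "nat \<Rightarrow> (nat \<Rightarrow> pt) \<Rightarrow> real" where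
  "MinEdge n v = Min (edge_len n v ` {..<n})"

text \<open>Minimum distance between non-adjacent edges (+\<infinity> if there is no such pair).\<close>
definition MD :: "nat \<Rightarrow> (nat \<Rightarrow> pt) \<Rightarrow> ereal" where
  "MD n v = (INF p \<in> {(x, y) | x y i j. i < n \<and> j < n \<and> i \<noteq> j \<and> \<not> adjacent_edges n i j
                         \<and> x \<in> edge n v i \<and> y \<in> edge n v j}.
               ereal (dist (fst p) (snd p)))"

definition vec_angle :: "pt \<Rightarrow> pt \<Rightarrow> real" where
  "vec_angle u w = arccos ((u \<bullet> w) / (norm u * norm w))"

definition turn_angle :: "nat \<Rightarrow> (nat \<Rightarrow> pt) \<Rightarrow> nat \<Rightarrow> real" where
  "turn_angle n v i = vec_angle (vtx n v i - vtx n v (i + n - 1)) (vtx n v (Suc i) - vtx n v i)"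

definition Rad :: "nat \<Rightarrow> (nat \<Rightarrow> pt) \<Rightarrow> nat \<Rightarrow> ereal" where
  "Rad n v i = (if turn_angle n v i = 0 then \<infinity>
     else ereal (min (edge_len n v (i + n - 1)) (edge_len n v i) / (2 * tan (turn_angle n v i / 2))))"

definition MinRad :: "nat \<Rightarrow> (nat \<Rightarrow> pt) \<Rightarrow> ereal" where
  "MinRad n v = Min (Rad n v ` {..<n})"

definition param :: "nat \<Rightarrow> (nat \<Rightarrow> pt) \<Rightarrow> real \<Rightarrow> pt" where
  "param n v t = (let k = nat (\<lfloor>t\<rfloor> mod int n); s = t - of_int \<lfloor>t\<rfloor>
                  in (1 - s) *\<^sub>R vtx n v k + s *\<^sub>R vtx n v (Suc k))"

definition turning_point :: "nat \<Rightarrow> (nat \<Rightarrow> pt) \<Rightarrow> pt \<Rightarrow> pt \<Rightarrow> bool" where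
  "turning_point n v x y \<longleftrightarrow> (\<exists>s. param n v s = y \<and> (\<exists>\<epsilon>>0.
     (monotone_on {s - \<epsilon>..s} (<) (<) (\<lambda>t. dist x (param n v t)) \<and>
      monotone_on {s..s + \<epsilon>} (<) (>) (\<lambda>t. dist x (param n v t))) \<or>
     (monotone_on {s - \<epsilon>..s} (<) (>) (\<lambda>t. dist x (param n v t)) \<and>
      monotone_on {s..s + \<epsilon>} (<) (<) (\<lambda>t. dist x (param n v t)))))"

definition DC :: "nat \<Rightarrow> (nat \<Rightarrow> pt) \<Rightarrow> (pt \<times> pt) set" where
  "DC n v = {(x, y). x \<in> knot_set n v \<and> y \<in> knot_set n v \<and> x \<noteq> y \<and>
                     turning_point n v y x \<and> turning_point n v x y}"

definition dcsd :: "nat \<Rightarrow> (nat \<Rightarrow> pt) \<Rightarrow> real" where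
  "dcsd n v = Inf ((\<lambda>(x, y). dist x y) ` DC n v)"

definition thickness_R :: "nat \<Rightarrow> (nat \<Rightarrow> pt) \<Rightarrow> ereal" where
  "thickness_R n v = min (MinRad n v) (ereal (dcsd n v / 2))"

end

theory Submission
  imports Defs
begin

lemma vtx_mod[simp]: "vtx n v (i mod n) = vtx n v i"
  by (simp add: vtx_def)

lemma vtx_add_n[simp]: "vtx n v (i + n) = vtx n v i"
  by (simp add: vtx_def)

lemma edge_len_mod: "edge_len n v (i mod n) = edge_len n v i"
  unfolding edge_len_def vtx_def by (simp add: mod_Suc_eq)

lemma edge_mod: "edge n v (i mod n) = edge n v i"
  unfolding edge_def vtx_def by (simp add: mod_Suc_eq)

lemma MinEdge_le: assumes "n > 0" shows "MinEdge n v \<le> edge_len n v i"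
proof -
  have "MinEdge n v \<le> edge_len n v (i mod n)"
    unfolding MinEdge_def using assms by (intro Min_le) auto
  thus ?thesis by (simp add: edge_len_mod)
qed

lemma Rad_mod: assumes "n > 0" shows "Rad n v (i mod n) = Rad n v i"
proof -
  have e: "(i mod n + n - 1) mod n = (i + n - 1) mod n"
  proof -
    have "i mod n + n - 1 = i mod n + (n-1)" "i + n - 1 = i + (n-1)" using assms by auto
    thus ?thesis by (simp add: mod_add_left_eq)
  qed
  have "vtx n v (i mod n + n - 1) = vtx n v (i + n - 1)"
    by (metis e vtx_mod)
  moreover have "vtx n v (Suc (i mod n)) = vtx n v (Suc i)"
    by (simp add: vtx_def mod_Suc_eq)
  moreover have "edge_len n v (i mod n + n - 1) = edge_len n v (i + n - 1)"
    by (metis e edge_len_mod)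
  ultimately show ?thesis
    unfolding Rad_def turn_angle_def by (simp add: edge_len_mod)
qed

lemma MinRad_le: assumes "n > 0" shows "MinRad n v \<le> Rad n v i"
proof -
  have "MinRad n v \<le> Rad n v (i mod n)"
    unfolding MinRad_def using assms by (intro Min_le) auto
  thus ?thesis using Rad_mod[OF assms] by simp
qed

abbreviation "bnd n v \<equiv> min (2 * thickness_R n v) (ereal (MinEdge n v))"

lemma bound_edge: assumes "n > 0" "edge_len n v i \<le> d" shows "bnd n v \<le> ereal d"
  using MinEdge_le[OF assms(1), of v i] assms(2)
  by (meson ereal_less_eq(3) min.coboundedI2 order_trans)

lemma bound_dcsd: assumes "dcsd n v \<le> d" shows "bnd n v \<le> ereal d"
proof -
  have "2 * thickness_R n v \<le> 2 * ereal (dcsd n v / 2)"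
    unfolding thickness_R_def by (intro ereal_mult_left_mono) auto
  also have "\<dots> = ereal (dcsd n v)" by simp
  finally show ?thesis using assms
    by (meson ereal_less_eq(3) min.coboundedI1 order_trans)
qed

lemma bound_rad: assumes "n > 0" "turn_angle n v i \<noteq> 0"
  "min (edge_len n v (i + n - 1)) (edge_len n v i) / tan (turn_angle n v i / 2) \<le> d"
  shows "bnd n v \<le> ereal d"
proof -
  have "2 * thickness_R n v \<le> 2 * MinRad n v"
    unfolding thickness_R_def by (intro ereal_mult_left_mono) auto
  also have "\<dots> \<le> 2 * Rad n v i"
    by (intro ereal_mult_left_mono MinRad_le assms) auto
  also have "\<dots> = ereal (min (edge_len n v (i + n - 1)) (edge_len n v i) / tan (turn_angle n v i / 2))"
    using assms(2) unfolding Rad_def by simp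
  finally show ?thesis using assms(3)
    by (meson ereal_less_eq(3) min.coboundedI1 order_trans)
qed

lemma quad_dec:
  fixes A B C lo hi t1 t2 :: real
  assumes "A > 0" "\<forall>t\<in>{lo..hi}. A*t^2+B*t+C \<ge> A*hi^2+B*hi+C" "lo \<le> t1" "t1 < t2" "t2 \<le> hi"
  shows "A*t1^2+B*t1+C > A*t2^2+B*t2+C"
proof -
  define u where "u = (t1+hi)/2"
  have "u \<in> {lo..hi}" using assms unfolding u_def by auto
  hence "A*u^2+B*u+C \<ge> A*hi^2+B*hi+C" using assms(2) by blast
  hence "(u - hi)*(A*(u+hi)+B) \<ge> 0" by (simp add: algebra_simps power2_eq_square)
  moreover have "u < hi" using assms unfolding u_def by auto
  ultimately have h: "A*(u+hi)+B \<le> 0" by (smt (verit, best) mult_neg_pos)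
  have "t1 + t2 < u + hi" using assms(3,4,5) unfolding u_def by argo
  hence "A*(t1+t2) < A*(u+hi)" using assms(1) by simp
  hence "A*(t1+t2)+B < 0" using h by linarith
  hence "(t1 - t2)*(A*(t1+t2)+B) > 0" using assms(4) by (simp add: mult_neg_neg)
  thus ?thesis by (simp add: algebra_simps power2_eq_square)
qed

lemma quad_inc:
  fixes A B C lo hi t1 t2 :: real
  assumes "A > 0" "\<forall>t\<in>{lo..hi}. A*t^2+B*t+C \<ge> A*lo^2+B*lo+C" "lo \<le> t1" "t1 < t2" "t2 \<le> hi"
  shows "A*t1^2+B*t1+C < A*t2^2+B*t2+C"
proof -
  define u where "u = (t2+lo)/2"
  have "u \<in> {lo..hi}" using assms unfolding u_def by auto
  hence "A*u^2+B*u+C \<ge> A*lo^2+B*lo+C" using assms(2) by blast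
  hence "(u - lo)*(A*(u+lo)+B) \<ge> 0" by (simp add: algebra_simps power2_eq_square)
  moreover have "u > lo" using assms unfolding u_def by auto
  ultimately have h: "A*(u+lo)+B \<ge> 0" by (smt (verit, best) mult_pos_neg)
  have "t1 + t2 > u + lo" using assms(3,4,5) unfolding u_def by argo
  hence "A*(t1+t2) > A*(u+lo)" using assms(1) by simp
  hence "A*(t1+t2)+B > 0" using h by linarith
  hence "(t2 - t1)*(A*(t1+t2)+B) > 0" using assms(4) by simp
  thus ?thesis by (simp add: algebra_simps power2_eq_square)
qed

lemma dist_line_sq:
  fixes c w y :: pt
  shows "(dist y (c + t *\<^sub>R w))^2 = (w \<bullet> w)*t^2 + (2*((c-y) \<bullet> w))*t + (c-y) \<bullet> (c-y)"
proof -
  have e: "(c - y) + t *\<^sub>R w = (c + t *\<^sub>R w) - y" by (simp add: algebra_simps)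
  have "dist y (c + t *\<^sub>R w) = norm ((c - y) + t *\<^sub>R w)"
    unfolding e by (metis dist_norm norm_minus_commute)
  hence "(dist y (c + t *\<^sub>R w))^2 = ((c - y) + t *\<^sub>R w) \<bullet> ((c - y) + t *\<^sub>R w)"
    by (simp add: power2_norm_eq_inner)
  also have "\<dots> = (w \<bullet> w)*t^2 + (2*((c-y) \<bullet> w))*t + (c-y) \<bullet> (c-y)"
    by (simp add: inner_add_left inner_add_right inner_commute algebra_simps power2_eq_square)
  finally show ?thesis .
qed

lemma seg_dec:
  fixes f :: "real \<Rightarrow> pt"
  assumes "w \<noteq> 0" "\<forall>t\<in>{lo..hi}. f t = c + t *\<^sub>R w"
    "\<forall>t\<in>{lo..hi}. dist y (f t) \<ge> dist y (f hi)"
  shows "monotone_on {lo..hi} (<) (>) (\<lambda>t. dist y (f t))"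
proof (cases "lo \<le> hi")
  case False thus ?thesis by (auto simp: monotone_on_def)
next
  case True
  define A where "A = w \<bullet> w"
  define B where "B = 2*((c-y) \<bullet> w)"
  define C where "C = (c-y) \<bullet> (c-y)"
  have A: "A > 0" using assms(1) unfolding A_def by simp
  have sq: "\<And>t. t \<in> {lo..hi} \<Longrightarrow> (dist y (f t))^2 = A*t^2+B*t+C"
    using assms(2) dist_line_sq unfolding A_def B_def C_def by simp
  have hi: "hi \<in> {lo..hi}" using True by simp
  have H: "\<forall>t\<in>{lo..hi}. A*t^2+B*t+C \<ge> A*hi^2+B*hi+C"
  proof
    fix t assume t: "t \<in> {lo..hi}"
    have "(dist y (f hi))^2 \<le> (dist y (f t))^2"
      using assms(3) t by (intro power_mono) auto
    thus "A*t^2+B*t+C \<ge> A*hi^2+B*hi+C" using sq[OF t] sq[OF hi] by simp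
  qed
  show ?thesis unfolding monotone_on_def
  proof (intro ballI impI)
    fix t1 t2 assume t: "t1 \<in> {lo..hi}" "t2 \<in> {lo..hi}" "t1 < t2"
    have "A*t1^2+B*t1+C > A*t2^2+B*t2+C"
      using quad_dec[OF A H, of t1 t2] t by auto
    hence "(dist y (f t1))^2 > (dist y (f t2))^2" using sq t by simp
    thus "dist y (f t1) > dist y (f t2)"
      by (meson power_less_imp_less_base zero_le_dist)
  qed
qed

lemma seg_inc:
  fixes f :: "real \<Rightarrow> pt"
  assumes "w \<noteq> 0" "\<forall>t\<in>{lo..hi}. f t = c + t *\<^sub>R w"
    "\<forall>t\<in>{lo..hi}. dist y (f t) \<ge> dist y (f lo)"
  shows "monotone_on {lo..hi} (<) (<) (\<lambda>t. dist y (f t))"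
proof (cases "lo \<le> hi")
  case False thus ?thesis by (auto simp: monotone_on_def)
next
  case True
  define A where "A = w \<bullet> w"
  define B where "B = 2*((c-y) \<bullet> w)"
  define C where "C = (c-y) \<bullet> (c-y)"
  have A: "A > 0" using assms(1) unfolding A_def by simp
  have sq: "\<And>t. t \<in> {lo..hi} \<Longrightarrow> (dist y (f t))^2 = A*t^2+B*t+C"
    using assms(2) dist_line_sq unfolding A_def B_def C_def by simp
  have lo: "lo \<in> {lo..hi}" using True by simp
  have H: "\<forall>t\<in>{lo..hi}. A*t^2+B*t+C \<ge> A*lo^2+B*lo+C"
  proof
    fix t assume t: "t \<in> {lo..hi}"
    have "(dist y (f lo))^2 \<le> (dist y (f t))^2"
      using assms(3) t by (intro power_mono) auto
    thus "A*t^2+B*t+C \<ge> A*lo^2+B*lo+C" using sq[OF t] sq[OF lo] by simp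
  qed
  show ?thesis unfolding monotone_on_def
  proof (intro ballI impI)
    fix t1 t2 assume t: "t1 \<in> {lo..hi}" "t2 \<in> {lo..hi}" "t1 < t2"
    have "A*t1^2+B*t1+C < A*t2^2+B*t2+C"
      using quad_inc[OF A H, of t1 t2] t by auto
    hence "(dist y (f t1))^2 < (dist y (f t2))^2" using sq t by simp
    thus "dist y (f t1) < dist y (f t2)"
      by (meson power_less_imp_less_base zero_le_dist)
  qed
qed

lemma param_lin:
  assumes "n > 0" "t \<in> {real m..real m + 1}"
  shows "param n v t = vtx n v m + (t - real m) *\<^sub>R (vtx n v (Suc m) - vtx n v m)"
proof (cases "t < real m + 1")
  case True
  have fl: "\<lfloor>t\<rfloor> = int m" using assms True by (simp add: floor_eq_iff)
  have k: "nat (int m mod int n) = m mod n" by (simp add: nat_mod_as_int)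
  have "param n v t = (1 - (t - real m)) *\<^sub>R vtx n v (m mod n) + (t - real m) *\<^sub>R vtx n v (Suc (m mod n))"
    unfolding param_def Let_def fl k by simp
  also have "vtx n v (m mod n) = vtx n v m" by simp
  also have "vtx n v (Suc (m mod n)) = vtx n v (Suc m)" by (simp add: vtx_def mod_Suc_eq)
  finally show ?thesis by (simp add: algebra_simps)
next
  case False
  hence t: "t = real m + 1" using assms by auto
  have fl: "\<lfloor>t\<rfloor> = int (Suc m)" using t by simp
  have k: "nat (int (Suc m) mod int n) = Suc m mod n" by (simp add: nat_mod_as_int)
  have "param n v t = vtx n v (Suc m mod n)"
    unfolding param_def Let_def fl k using t by simp
  thus ?thesis using t by simp
qed

lemma seg_mem:
  fixes a b :: pt
  assumes "0 \<le> u" "u \<le> 1"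
  shows "a + u *\<^sub>R (b - a) \<in> closed_segment a b"
proof -
  have "a + u *\<^sub>R (b - a) = (1 - u) *\<^sub>R a + u *\<^sub>R b" by (simp add: algebra_simps)
  thus ?thesis using assms by (auto simp: in_segment)
qed

lemma param_in_edge:
  assumes "n > 0" "t \<in> {real m..real m + 1}"
  shows "param n v t \<in> edge n v m"
  unfolding param_lin[OF assms] edge_def using assms(2) by (intro seg_mem) auto

lemma TP_gen:
  assumes n: "n > 0" and e: "\<epsilon> > 0"
    and s1: "{s-\<epsilon>..s} \<subseteq> {real m1..real m1+1}" and s2: "{s..s+\<epsilon>} \<subseteq> {real m2..real m2 + 1}"
    and d1: "vtx n v m1 \<noteq> vtx n v (Suc m1)" and d2: "vtx n v m2 \<noteq> vtx n v (Suc m2)"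
    and H: "\<forall>t\<in>{s-\<epsilon>..s+\<epsilon>}. dist y (param n v t) \<ge> dist y (param n v s)"
  shows "turning_point n v y (param n v s)"
proof -
  define w1 where "w1 = vtx n v (Suc m1) - vtx n v m1"
  define w2 where "w2 = vtx n v (Suc m2) - vtx n v m2"
  have L1: "\<forall>t\<in>{s-\<epsilon>..s}. param n v t = (vtx n v m1 - real m1 *\<^sub>R w1) + t *\<^sub>R w1"
  proof
    fix t assume "t \<in> {s-\<epsilon>..s}"
    hence "t \<in> {real m1..real m1+1}" using s1 by blast
    thus "param n v t = (vtx n v m1 - real m1 *\<^sub>R w1) + t *\<^sub>R w1"
      using param_lin[OF n, of t m1] unfolding w1_def by (simp add: algebra_simps)
  qed
  have L2: "\<forall>t\<in>{s..s+\<epsilon>}. param n v t = (vtx n v m2 - real m2 *\<^sub>R w2) + t *\<^sub>R w2"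
  proof
    fix t assume "t \<in> {s..s+\<epsilon>}"
    hence "t \<in> {real m2..real m2+1}" using s2 by blast
    thus "param n v t = (vtx n v m2 - real m2 *\<^sub>R w2) + t *\<^sub>R w2"
      using param_lin[OF n, of t m2] unfolding w2_def by (simp add: algebra_simps)
  qed
  have M1: "monotone_on {s-\<epsilon>..s} (<) (>) (\<lambda>t. dist y (param n v t))"
    by (rule seg_dec[OF _ L1]) (use d1 H e in \<open>auto simp: w1_def\<close>)
  have M2: "monotone_on {s..s+\<epsilon>} (<) (<) (\<lambda>t. dist y (param n v t))"
    by (rule seg_inc[OF _ L2]) (use d2 H e in \<open>auto simp: w2_def\<close>)
  show ?thesis unfolding turning_point_def using M1 M2 e by blast
qed

lemma knot_n: "polygonal_knot n v \<Longrightarrow> 3 \<le> n"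
  by (simp add: polygonal_knot_def)

lemma knot_vne:
  assumes "polygonal_knot n v" shows "vtx n v i \<noteq> vtx n v (Suc i)"
proof
  assume eq: "vtx n v i = vtx n v (Suc i)"
  have n: "n \<ge> 3" using knot_n[OF assms] .
  have inj: "inj_on v {..<n}" using assms by (simp add: polygonal_knot_def)
  have "i mod n = Suc i mod n"
    using inj eq n unfolding vtx_def by (auto dest: inj_onD)
  thus False using n by (simp add: mod_Suc split: if_splits)
qed

lemma knot_disj:
  assumes "polygonal_knot n v" "i < n" "j < n" "i \<noteq> j" "\<not> adjacent_edges n i j"
  shows "edge n v i \<inter> edge n v j = {}"
  using assms unfolding polygonal_knot_def adjacent_edges_def by auto

lemma TP_vert:
  assumes K: "polygonal_knot n v" and k: "k \<ge> 1"
    and H: "\<forall>z \<in> edge n v (k - 1) \<union> edge n v k. dist y z \<ge> dist y (vtx n v k)"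
  shows "turning_point n v y (vtx n v k)"
proof -
  have n: "n > 0" using knot_n[OF K] by simp
  have rk: "real (k - 1) = real k - 1" using k by simp
  have pk: "param n v (real k) = vtx n v k" using param_lin[OF n, of "real k" k] by simp
  have "turning_point n v y (param n v (real k))"
  proof (rule TP_gen[OF n, of 1 _ "k - 1" k])
    show "{real k - 1..real k} \<subseteq> {real (k - 1)..real (k - 1) + 1}" using rk by simp
    show "vtx n v (k - 1) \<noteq> vtx n v (Suc (k - 1))" by (rule knot_vne[OF K])
    show "vtx n v k \<noteq> vtx n v (Suc k)" by (rule knot_vne[OF K])
    show "\<forall>t\<in>{real k - 1..real k + 1}. dist y (param n v (real k)) \<le> dist y (param n v t)"
    proof
      fix t assume t: "t \<in> {real k - 1..real k + 1}"
      have "param n v t \<in> edge n v (k - 1) \<union> edge n v k"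
      proof (cases "t \<le> real k")
        case True
        hence "t \<in> {real (k-1)..real (k-1) + 1}" using t rk by auto
        thus ?thesis using param_in_edge[OF n] by blast
      next
        case False
        hence "t \<in> {real k..real k + 1}" using t by auto
        thus ?thesis using param_in_edge[OF n] by blast
      qed
      thus "dist y (param n v (real k)) \<le> dist y (param n v t)" using H pk by auto
    qed
  qed auto
  thus ?thesis using pk by simp
qed

lemma TP_int:
  assumes K: "polygonal_knot n v" and sg: "0 < \<sigma>" "\<sigma> < 1"
    and x: "x = vtx n v k + \<sigma> *\<^sub>R (vtx n v (Suc k) - vtx n v k)"
    and H: "\<forall>z \<in> edge n v k. dist y z \<ge> dist y x"
  shows "turning_point n v y x"
proof -
  have n: "n > 0" using knot_n[OF K] by simp
  define s where "s = real k + \<sigma>"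
  define e where "e = min \<sigma> (1 - \<sigma>)"
  have e0: "e > 0" using sg unfolding e_def by simp
  have px: "param n v s = x" using param_lin[OF n, of s k] sg x unfolding s_def by simp
  have I: "{s - e..s + e} \<subseteq> {real k..real k + 1}" unfolding s_def e_def by auto
  have "turning_point n v y (param n v s)"
  proof (rule TP_gen[OF n e0, of s k k])
    show "vtx n v k \<noteq> vtx n v (Suc k)" by (rule knot_vne[OF K])
    show "\<forall>t\<in>{s - e..s + e}. dist y (param n v s) \<le> dist y (param n v t)"
      using I param_in_edge[OF n] H px by blast
  qed (use I knot_vne[OF K] in auto)
  thus ?thesis using px by simp
qed

lemma core:
  fixes P V Q y :: pt
  assumes PV: "P \<noteq> V" and QV: "Q \<noteq> V" and y: "y \<in> closed_segment V Q"
  shows "dist P y \<ge> dist P V \<or> (vec_angle (V - Q) (P - V) \<noteq> 0 \<and>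
           dist P y \<ge> min (dist Q V) (dist V P) / tan (vec_angle (V - Q) (P - V) / 2))"
proof -
  obtain t where t: "0 \<le> t" "t \<le> 1" "y = (1 - t) *\<^sub>R V + t *\<^sub>R Q"
    using y by (auto simp: in_segment)
  define a where "a = P - V"
  define b where "b = V - Q"
  define D where "D = dist P y"
  define ip where "ip = a \<bullet> b"
  define na where "na = norm a"
  define nb where "nb = norm b"
  have D0: "D \<ge> 0" unfolding D_def by simp
  have na0: "na > 0" using PV unfolding na_def a_def by simp
  have nb0: "nb > 0" using QV unfolding nb_def b_def by simp
  have Py: "P - y = a + t *\<^sub>R b" unfolding a_def b_def t(3) by (simp add: algebra_simps)
  have D2: "D^2 = na^2 + 2*t*ip + t^2*nb^2"
  proof -
    have "D^2 = (a + t *\<^sub>R b) \<bullet> (a + t *\<^sub>R b)"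
      unfolding D_def dist_norm Py by (simp add: power2_norm_eq_inner)
    also have "\<dots> = a \<bullet> a + 2*t*(a \<bullet> b) + t^2*(b \<bullet> b)"
      by (simp add: inner_add_left inner_add_right inner_commute algebra_simps power2_eq_square)
    finally show ?thesis unfolding na_def nb_def ip_def by (simp add: power2_norm_eq_inner)
  qed
  have naPV: "na = dist P V" "na = dist V P" unfolding na_def a_def by (simp_all add: dist_norm norm_minus_commute)
  have nbQV: "nb = dist Q V" unfolding nb_def b_def by (simp add: dist_norm norm_minus_commute)
  show ?thesis
  proof (cases "ip \<ge> 0")
    case True
    have "na^2 \<le> D^2" using D2 True t by simp
    hence "na \<le> D" using D0 by (rule power2_le_imp_le)
    thus ?thesis using naPV unfolding D_def by simp
  next
    case False
    hence ipn: "ip < 0" by simp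
    define c where "c = (b \<bullet> a) / (nb * na)"
    have ang: "vec_angle (V - Q) (P - V) = arccos c"
      unfolding vec_angle_def c_def a_def b_def nb_def na_def by simp
    have cs: "\<bar>ip\<bar> \<le> na * nb" unfolding ip_def na_def nb_def by (rule Cauchy_Schwarz_ineq2)
    have cdef: "c = ip / (na * nb)" unfolding c_def ip_def by (simp add: inner_commute mult.commute)
    have c1: "-1 \<le> c" "c \<le> 1" using cs na0 nb0 unfolding cdef
      by (auto simp: abs_le_iff divide_le_eq le_divide_eq)
    have cneg: "c < 0" using ipn na0 nb0 unfolding cdef by (simp add: divide_neg_pos)
    have angne: "arccos c \<noteq> 0" using arccos_eq_0_iff[of c] c1 cneg by auto
    have tanh: "tan (arccos c / 2) = sqrt (1 - c^2) / (c + 1)"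
      using tan_half[of "arccos c / 2"] c1 by (simp add: sin_arccos)
    define m where "m = min (dist Q V) (dist V P)"
    have m_le: "m \<le> na" unfolding m_def using naPV by simp
    have m0: "m \<ge> 0" unfolding m_def by simp
    have val: "m / tan (arccos c / 2) = m * (c + 1) / sqrt (1 - c^2)"
      unfolding tanh by simp
    have "D \<ge> m * (c + 1) / sqrt (1 - c^2)"
    proof (cases "c = -1")
      case True thus ?thesis using D0 by simp
    next
      case False
      hence cgt: "c > -1" using c1 by simp
      have "(1 - c)*(1 + c) > 0" using cgt cneg by (intro mult_pos_pos) auto
      hence pos: "1 - c^2 > 0" by (simp add: algebra_simps power2_eq_square)
      define S where "S = sqrt (1 - c^2)"
      have S0: "S > 0" unfolding S_def using pos by simp
      have S2: "S^2 = 1 - c^2" unfolding S_def using pos by simp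
      have key: "nb^2 * D^2 - (na^2*nb^2 - ip^2) = (t*nb^2 + ip)^2"
        unfolding D2 by (simp add: algebra_simps power2_eq_square)
      have "(t*nb^2 + ip)^2 \<ge> 0" by simp
      hence "nb^2 * D^2 \<ge> na^2*nb^2 - ip^2" using key by linarith
      moreover have "na^2*nb^2 - ip^2 = nb^2 * (na * S)^2"
      proof -
        have ipc: "ip = c * (na * nb)" unfolding cdef using na0 nb0 by simp
        have "na^2*nb^2 - ip^2 = (na*nb)^2 * (1 - c^2)" unfolding ipc by (simp add: power_mult_distrib algebra_simps)
        thus ?thesis by (simp add: S2[symmetric] power_mult_distrib mult_ac)
      qed
      ultimately have "nb^2 * (na * S)^2 \<le> nb^2 * D^2" by simp
      hence "(na * S)^2 \<le> D^2" using nb0 by simp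
      hence DS: "na * S \<le> D" using D0 by (rule power2_le_imp_le)
      have "m * (c + 1) \<le> na * (c + 1)" using m_le cgt by (simp add: mult_right_mono)
      also have "\<dots> \<le> na * ((1 - c) * (1 + c))"
      proof -
        have cc: "c*(1+c) \<le> 0" using cgt cneg by (intro mult_nonpos_nonneg) auto
        show ?thesis using na0 cc by (intro mult_left_mono) (auto simp: algebra_simps)
      qed
      also have "\<dots> = na * S^2"
      proof -
        have "(1-c)*(1+c) = 1 - c^2" by (simp add: algebra_simps power2_eq_square)
        thus ?thesis using S2 by simp
      qed
      also have "\<dots> = (na * S) * S" by (simp add: power2_eq_square)
      also have "\<dots> \<le> D * S" using DS S0 by (simp add: mult_right_mono)
      finally have "m * (c + 1) \<le> D * S" .
      thus ?thesis using S0 unfolding S_def[symmetric] by (simp add: divide_le_eq)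
    qed
    thus ?thesis using ang angne val unfolding D_def m_def by simp
  qed
qed

lemma vec_angle_swap: "vec_angle (V - Q) (P - V) = vec_angle (V - P) (Q - V)"
proof -
  have "(V - Q) \<bullet> (P - V) = (V - P) \<bullet> (Q - V)"
    by (simp add: inner_diff_left inner_diff_right inner_commute)
  moreover have "norm (V - Q) * norm (P - V) = norm (V - P) * norm (Q - V)"
    by (simp add: norm_minus_commute mult.commute)
  ultimately show ?thesis unfolding vec_angle_def by simp
qed

lemma G:
  assumes K: "polygonal_knot n v" and y: "y \<in> edge n v j"
    and x: "x = vtx n v (j + 2) \<or> x = vtx n v (j + n - 1)"
  shows "bnd n v \<le> ereal (dist x y)"
proof -
  have n: "n > 0" using knot_n[OF K] by simp
  from x show ?thesis
  proof
    assume x: "x = vtx n v (j + 2)"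
    define P where "P = vtx n v (Suc (Suc j))"
    define V where "V = vtx n v (Suc j)"
    define Q where "Q = vtx n v j"
    have xP: "x = P" unfolding x P_def by (simp add: numeral_2_eq_2)
    have PV: "P \<noteq> V" unfolding P_def V_def using knot_vne[OF K, of "Suc j"] by metis
    have QV: "Q \<noteq> V" unfolding Q_def V_def using knot_vne[OF K, of j] by metis
    have yseg: "y \<in> closed_segment V Q" using y unfolding edge_def V_def Q_def
      by (simp add: closed_segment_commute)
    have e1: "edge_len n v (Suc j) = dist V P" unfolding edge_len_def V_def P_def by simp
    have e0: "edge_len n v (Suc j + n - 1) = dist Q V"
    proof -
      have "Suc j + n - 1 = j + n" by simp
      moreover have "vtx n v (Suc (j + n)) = vtx n v (Suc j)"
        using vtx_add_n[of n v "Suc j"] by simp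
      ultimately show ?thesis unfolding edge_len_def Q_def V_def by simp
    qed
    have ta: "turn_angle n v (Suc j) = vec_angle (V - Q) (P - V)"
    proof -
      have "Suc j + n - 1 = j + n" by simp
      thus ?thesis unfolding turn_angle_def P_def V_def Q_def by simp
    qed
    from core[OF PV QV yseg] show ?thesis
    proof
      assume "dist P V \<le> dist P y"
      thus ?thesis using bound_edge[OF n, of v "Suc j"] e1 xP by (simp add: dist_commute)
    next
      assume h: "vec_angle (V - Q) (P - V) \<noteq> 0 \<and>
        min (dist Q V) (dist V P) / tan (vec_angle (V - Q) (P - V) / 2) \<le> dist P y"
      show ?thesis using bound_rad[OF n, of v "Suc j" "dist x y"] h e0 e1 ta xP by simp
    qed
  next
    assume x: "x = vtx n v (j + n - 1)"
    define P where "P = vtx n v (j + n - 1)"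
    define V where "V = vtx n v j"
    define Q where "Q = vtx n v (Suc j)"
    have xP: "x = P" unfolding x P_def by simp
    have sj: "Suc (j + n - 1) = j + n" using n by simp
    have PV: "P \<noteq> V" unfolding P_def V_def using knot_vne[OF K, of "j + n - 1"] sj by simp
    have QV: "Q \<noteq> V" unfolding Q_def V_def using knot_vne[OF K, of j] by metis
    have yseg: "y \<in> closed_segment V Q" using y unfolding edge_def V_def Q_def by simp
    have e1: "edge_len n v j = dist V Q" unfolding edge_len_def V_def Q_def by simp
    have e0: "edge_len n v (j + n - 1) = dist P V" unfolding edge_len_def P_def V_def sj by simp
    have ta: "turn_angle n v j = vec_angle (V - Q) (P - V)"
      unfolding vec_angle_swap unfolding turn_angle_def P_def V_def Q_def by simp
    from core[OF PV QV yseg] show ?thesis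
    proof
      assume "dist P V \<le> dist P y"
      thus ?thesis using bound_edge[OF n, of v "j + n - 1"] e0 xP by (simp add: dist_commute)
    next
      assume h: "vec_angle (V - Q) (P - V) \<noteq> 0 \<and>
        min (dist Q V) (dist V P) / tan (vec_angle (V - Q) (P - V) / 2) \<le> dist P y"
      have "min (edge_len n v (j + n - 1)) (edge_len n v j) = min (dist Q V) (dist V P)"
        using e0 e1 by (simp add: dist_commute min.commute)
      thus ?thesis using bound_rad[OF n, of v j "dist x y"] h ta xP by simp
    qed
  qed
qed

lemma adj_sym: "adjacent_edges n i j \<longleftrightarrow> adjacent_edges n j i"
  unfolding adjacent_edges_def by auto

lemma stepX:
  assumes K: "polygonal_knot n v" and ab: "a < n" "b < n" "a \<noteq> b" "\<not> adjacent_edges n a b"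
    and x: "x \<in> edge n v a" and y: "y \<in> edge n v b"
    and MIN: "\<forall>i<n. i \<noteq> b \<longrightarrow> \<not> adjacent_edges n i b \<longrightarrow> (\<forall>z\<in>edge n v i. dist y z \<ge> dist y x)"
  shows "turning_point n v y x \<or> bnd n v \<le> ereal (dist x y)"
proof -
  have n: "n > 0" using knot_n[OF K] by simp
  obtain \<sigma> where sg: "0 \<le> \<sigma>" "\<sigma> \<le> 1" and xs: "x = (1 - \<sigma>) *\<^sub>R vtx n v a + \<sigma> *\<^sub>R vtx n v (Suc a)"
    using x unfolding edge_def by (auto simp: in_segment)
  have MINa: "\<forall>z\<in>edge n v a. dist y z \<ge> dist y x" using MIN ab by blast
  consider "0 < \<sigma> \<and> \<sigma> < 1" | "\<sigma> = 0" | "\<sigma> = 1" using sg by linarith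
  thus ?thesis
  proof cases
    case 1
    have "x = vtx n v a + \<sigma> *\<^sub>R (vtx n v (Suc a) - vtx n v a)" unfolding xs by (simp add: algebra_simps)
    thus ?thesis using TP_int[OF K _ _ _ MINa] 1 by blast
  next
    case 2
    hence xa: "x = vtx n v a" using xs by simp
    define ob where "ob = (a + n - 1) mod n"
    have so: "Suc ob mod n = a"
    proof -
      have "Suc ob mod n = Suc (a + n - 1) mod n" unfolding ob_def by (simp add: mod_Suc_eq)
      also have "Suc (a + n - 1) = a + n" using n by simp
      finally show ?thesis using ab by simp
    qed
    have on: "ob < n" unfolding ob_def using n by simp
    show ?thesis
    proof (cases "ob \<noteq> b \<and> \<not> adjacent_edges n ob b")
      case True
      have eo: "edge n v (a + n - 1) = edge n v ob" unfolding ob_def by (simp add: edge_mod)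
      have ea: "edge n v (a + n) = edge n v a" by (metis edge_mod mod_add_self2)
      have "a + n - 1 = (a + n) - 1" by simp
      have "\<forall>z\<in>edge n v (a + n - 1) \<union> edge n v (a + n). dist y z \<ge> dist y (vtx n v (a + n))"
        using MIN True on eo ea MINa xa by auto
      hence "turning_point n v y (vtx n v (a + n))" using TP_vert[OF K, of "a + n"] n by simp
      thus ?thesis using xa by simp
    next
      case False
      hence "ob = Suc b mod n"
        using so ab unfolding adjacent_edges_def by auto
      hence "(b + 2) mod n = a"
        using so by (metis add_2_eq_Suc' mod_Suc_eq)
      hence "x = vtx n v (b + 2)" using xa by (metis vtx_mod)
      thus ?thesis using G[OF K y] by blast
    qed
  next
    case 3
    hence xa: "x = vtx n v (Suc a)" using xs by simp
    define ob where "ob = Suc a mod n"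
    have on: "ob < n" unfolding ob_def using n by simp
    show ?thesis
    proof (cases "ob \<noteq> b \<and> \<not> adjacent_edges n ob b")
      case True
      have eo: "edge n v (Suc a) = edge n v ob" unfolding ob_def by (simp add: edge_mod)
      have "\<forall>z\<in>edge n v (Suc a - 1) \<union> edge n v (Suc a). dist y z \<ge> dist y (vtx n v (Suc a))"
        using MIN True on eo MINa xa by auto
      hence "turning_point n v y (vtx n v (Suc a))" using TP_vert[OF K, of "Suc a"] by simp
      thus ?thesis using xa by simp
    next
      case False
      have nab: "Suc a mod n \<noteq> Suc b mod n"
        using ab by (auto simp: mod_Suc split: if_splits)
      have "ob \<noteq> b" using ab unfolding ob_def adjacent_edges_def by auto
      hence "b = Suc ob mod n"
        using False nab unfolding ob_def adjacent_edges_def by auto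
      hence "(b + n - 1) mod n = Suc a mod n"
      proof -
        assume bo: "b = Suc ob mod n"
        have "(b + n - 1) mod n = (b + (n - 1)) mod n" using n by simp
        also have "\<dots> = (Suc ob + (n - 1)) mod n" unfolding bo by (simp add: mod_add_left_eq)
        also have "Suc ob + (n - 1) = ob + n" using n by simp
        also have "(ob + n) mod n = Suc a mod n" unfolding ob_def by simp
        finally show ?thesis .
      qed
      hence "x = vtx n v (b + n - 1)" using xa by (metis vtx_mod)
      thus ?thesis using G[OF K y] by blast
    qed
  qed
qed

theorem corollary3p7:
  fixes n :: nat and v :: "nat \<Rightarrow> real ^ 3"
  assumes "polygonal_knot n v"
  shows "MD n v \<ge> min (2 * thickness_R n v) (ereal (MinEdge n v))"
proof -
  note K = assms
  have n: "n > 0" using knot_n[OF K] by simp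
  define I where "I = {(i,j). i<n \<and> j<n \<and> i\<noteq>j \<and> \<not> adjacent_edges n i j}"
  define S where "S = {(x, y) | x y i j. i < n \<and> j < n \<and> i \<noteq> j \<and> \<not> adjacent_edges n i j
                         \<and> x \<in> edge n v i \<and> y \<in> edge n v j}"
  have MDS: "MD n v = (INF p\<in>S. ereal (dist (fst p) (snd p)))" unfolding MD_def S_def by simp
  have S_eq: "S = (\<Union>ij\<in>I. edge n v (fst ij) \<times> edge n v (snd ij))" unfolding S_def I_def by auto blast
  have fI: "finite I" by (rule finite_subset[of _ "{..<n} \<times> {..<n}"]) (auto simp: I_def)
  have cS: "compact S" unfolding S_eq using fI
    by (intro compact_UN compact_Times) (auto simp: edge_def)
  have cont: "continuous_on S (\<lambda>p. dist (fst p) (snd p))" by (intro continuous_intros)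
  show ?thesis unfolding MDS
  proof (rule INF_greatest)
    fix p assume p: "p \<in> S"
    hence ne: "S \<noteq> {}" by auto
    obtain p0 where p0: "p0 \<in> S" and p0m: "\<forall>q\<in>S. dist (fst p0) (snd p0) \<le> dist (fst q) (snd q)"
      using continuous_attains_inf[OF cS ne cont] by blast
    obtain x y a b where xy: "p0 = (x, y)" and ab: "a < n" "b < n" "a \<noteq> b" "\<not> adjacent_edges n a b"
      and x: "x \<in> edge n v a" and y: "y \<in> edge n v b"
      using p0 unfolding S_def by blast
    have MINx: "\<forall>i<n. i \<noteq> b \<longrightarrow> \<not> adjacent_edges n i b \<longrightarrow> (\<forall>z\<in>edge n v i. dist y z \<ge> dist y x)"
    proof (intro allI impI ballI)
      fix i z assume "i < n" "i \<noteq> b" "\<not> adjacent_edges n i b" "z \<in> edge n v i"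
      hence "(z, y) \<in> S" unfolding S_def using ab y by blast
      thus "dist y z \<ge> dist y x" using p0m xy by (force simp: dist_commute)
    qed
    have MINy: "\<forall>j<n. j \<noteq> a \<longrightarrow> \<not> adjacent_edges n j a \<longrightarrow> (\<forall>z\<in>edge n v j. dist x z \<ge> dist x y)"
    proof (intro allI impI ballI)
      fix j z assume "j < n" "j \<noteq> a" "\<not> adjacent_edges n j a" "z \<in> edge n v j"
      hence "(x, z) \<in> S" unfolding S_def using ab x adj_sym[of n j a] by blast
      thus "dist x z \<ge> dist x y" using p0m xy by force
    qed
    have ab': "\<not> adjacent_edges n b a" using ab adj_sym by blast
    have X: "turning_point n v y x \<or> bnd n v \<le> ereal (dist x y)"
      by (rule stepX[OF K ab x y MINx])
    have Y: "turning_point n v x y \<or> bnd n v \<le> ereal (dist x y)"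
      using stepX[OF K ab(2,1) ab(3)[symmetric] ab' y x MINy] by (simp add: dist_commute)
    have B: "bnd n v \<le> ereal (dist x y)"
    proof (cases "turning_point n v y x \<and> turning_point n v x y")
      case True
      have xne: "x \<noteq> y" using knot_disj[OF K ab] x y by blast
      have "x \<in> knot_set n v" "y \<in> knot_set n v" unfolding knot_set_def using x y ab by auto
      hence "(x, y) \<in> DC n v" unfolding DC_def using True xne by simp
      hence "dist x y \<in> (\<lambda>(x, y). dist x y) ` DC n v" by force
      moreover have "bdd_below ((\<lambda>(x, y). dist x y) ` DC n v)"
        by (rule bdd_belowI[of _ 0]) auto
      ultimately have "dcsd n v \<le> dist x y" unfolding dcsd_def by (rule cInf_lower)
      thus ?thesis by (rule bound_dcsd)
    next
      case False thus ?thesis using X Y by blast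
    qed
    have "dist x y \<le> dist (fst p) (snd p)" using p0m p xy by force
    thus "bnd n v \<le> ereal (dist (fst p) (snd p))" using B by (meson ereal_less_eq(3) order_trans)
  qed
qed

end
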